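(* Let $IS\in\{\Box,\blacksquare\}^2$. There is no correct compositional translation from $\mathrm{SYNCSIMPLE}$ into $\mathrm{LOCKSIMPLE}_{2,IS}$ of blocking type $(P_1P_1,P_2)$.
   Context: $\mathrm{SYNCSIMPLE}$: subprocesses $\mathcal{U} ::= \checkmark \mid 0 \mid\, !\mathcal{U} \mid\, ?\mathcal{U}$; processes are finite parallel compositions ($\mid$ associative, commutative, $0$ a unit). Reduction: $!\mathcal{U}_1\mid ?\mathcal{U}_2\mid \mathcal{P}\to \mathcal{U}_1\mid\mathcal{U}_2\mid\mathcal{P}$. Successful: of form $\checkmark\mid\mathcal{P}$; may-convergent: reduces to a successful process; must-convergent: every reachable process is may-convergent. $\mathrm{LOCKSIMPLE}_{k,IS}$ ($IS\in\{\Box,\blacksquare\}^k$, $\Box$ empty, $\blacksquare$ full): subprocesses are words over $\{P_1,T_1,\dots,P_k,T_k\}$ followed by $0$ or $\checkmark$; states $(\mathcal{P},C)$ reduce by $(P_i\mathcal{U}\mid\mathcal{P},C)\to(\mathcal{U}\mid\mathcal{P},C[C_i:=\blacksquare])$ only if $C_i=\Box$, and $(T_i\mathcal{U}\mid\mathcal{P},C)\to(\mathcal{U}\mid\mathcal{P},C[C_i:=\Box])$ always. Success = process contains $\checkmark$; a process $\mathcal{P}$ is may/must-convergent iff the state $(\mathcal{P},IS)$ is. A compositional translation $\tau$ is given by words $\tau(!),\tau(?)$ with $\tau(0)=0$, $\tau(\checkmark)=\checkmark$, $\tau(!\mathcal{U})=\tau(!)\tau(\mathcal{U})$, $\tau(?\mathcal{U})=\tau(?)\tau(\mathcal{U})$,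 $\tau$ commuting with $\mid$; correct = preserves and reflects may- and must-convergence. Blocking type: for a word $S$, run $S$ as a single subprocess from $IS$; if it gets stuck at an occurrence of $P_i$, that occurrence ends the blocking prefix; if it is the first symbol from $\{P_i,T_i\}$ in $S$ the blocking type is $P_i$, otherwise the blocking prefix has form $R_1P_iR_2P_i$ with $R_2$ containing no $P_i,T_i$ and the blocking type is $P_iP_i$. $\tau$ has blocking type $(W_1,W_2)$ if $\tau(!)$ has type $W_1$ and $\tau(?)$ type $W_2$. *)

theory Defs
  imports Main "HOL-Library.Multiset"
begin

datatype ssub = SCheck | SZero | SSend ssub | SRecv ssub

(* a process is a finite parallel composition = multiset of subprocesses *)
type_synonym sproc = "ssub multiset"

inductive sstep :: "sproc \<Rightarrow> sproc \<Rightarrow> bool" where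
  "sstep ({#SSend u1, SRecv u2#} + p) ({#u1, u2#} + p)"

definition ssuccessful :: "sproc \<Rightarrow> bool" where
  "ssuccessful p \<longleftrightarrow> SCheck \<in># p"

definition smay :: "sproc \<Rightarrow> bool" where
  "smay p \<longleftrightarrow> (\<exists>q. sstep\<^sup>*\<^sup>* p q \<and> ssuccessful q)"

definition smust :: "sproc \<Rightarrow> bool" where
  "smust p \<longleftrightarrow> (\<forall>q. sstep\<^sup>*\<^sup>* p q \<longrightarrow> smay q)"

(* P i = take lock i, T i = put/release lock i; locks are indexed 1..k *)
datatype lsym = P nat | T nat

fun lidx :: "lsym \<Rightarrow> nat" where
  "lidx (P i) = i" | "lidx (T i) = i"

definition wf_word :: "nat \<Rightarrow> lsym list \<Rightarrow> bool" where
  "wf_word k w \<longleftrightarrow> (\<forall>s\<in>set w. 1 \<le> lidx s \<and> lidx s \<le> k)"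

(* subprocess: word followed by 0 (False) or checkmark (True) *)
type_synonym lsub = "lsym list \<times> bool"
type_synonym lproc = "lsub multiset"
(* lock store: True = full (\<blacksquare>), False = empty (\<box>) *)
type_synonym lstore = "nat \<Rightarrow> bool"

inductive lstep :: "(lproc \<times> lstore) \<Rightarrow> (lproc \<times> lstore) \<Rightarrow> bool" where
  lstepP: "\<not> C i \<Longrightarrow> lstep ({#(P i # w, e)#} + p, C) ({#(w, e)#} + p, C(i := True))"
| lstepT: "lstep ({#(T i # w, e)#} + p, C) ({#(w, e)#} + p, C(i := False))"

definition lsuccessful :: "lproc \<times> lstore \<Rightarrow> bool" where
  "lsuccessful s \<longleftrightarrow> ([], True) \<in># fst s"

definition lmay :: "lproc \<times> lstore \<Rightarrow> bool" where
  "lmay s \<longleftrightarrow> (\<exists>s'. lstep\<^sup>*\<^sup>* s s' \<and> lsuccessful s')"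

definition lmust :: "lproc \<times> lstore \<Rightarrow> bool" where
  "lmust s \<longleftrightarrow> (\<forall>s'. lstep\<^sup>*\<^sup>* s s' \<longrightarrow> lmay s')"

(* tau given by words ws = tau(!) and wr = tau(?) *)
fun trsub :: "lsym list \<Rightarrow> lsym list \<Rightarrow> ssub \<Rightarrow> lsub" where
  "trsub ws wr SCheck = ([], True)"
| "trsub ws wr SZero = ([], False)"
| "trsub ws wr (SSend u) = (ws @ fst (trsub ws wr u), snd (trsub ws wr u))"
| "trsub ws wr (SRecv u) = (wr @ fst (trsub ws wr u), snd (trsub ws wr u))"

definition trproc :: "lsym list \<Rightarrow> lsym list \<Rightarrow> sproc \<Rightarrow> lproc" where
  "trproc ws wr p = image_mset (trsub ws wr) p"

definition correct_translation :: "lstore \<Rightarrow> lsym list \<Rightarrow> lsym list \<Rightarrow> bool" where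
  "correct_translation IS ws wr \<longleftrightarrow>
     (\<forall>p. (smay p \<longleftrightarrow> lmay (trproc ws wr p, IS)) \<and>
          (smust p \<longleftrightarrow> lmust (trproc ws wr p, IS)))"

(* running a single word from a store; None = stuck *)
fun exec :: "lstore \<Rightarrow> lsym list \<Rightarrow> lstore option" where
  "exec C [] = Some C"
| "exec C (P i # w) = (if C i then None else exec (C(i := True)) w)"
| "exec C (T i # w) = exec (C(i := False)) w"

(* u @ [P i] is the blocking prefix of S (run from IS): u runs through,
   and then P i is blocked because lock i is full *)
definition blocking_prefix :: "lstore \<Rightarrow> lsym list \<Rightarrow> lsym list \<Rightarrow> nat \<Rightarrow> bool" where
  "blocking_prefix IS S u i \<longleftrightarrow>
     (\<exists>v C. S = u @ P i # v \<and> exec IS u = Some C \<and> C i)"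

definition btype_P :: "lstore \<Rightarrow> lsym list \<Rightarrow> nat \<Rightarrow> bool" where
  "btype_P IS S i \<longleftrightarrow>
     (\<exists>u. blocking_prefix IS S u i \<and> P i \<notin> set u \<and> T i \<notin> set u)"

definition btype_PP :: "lstore \<Rightarrow> lsym list \<Rightarrow> nat \<Rightarrow> bool" where
  "btype_PP IS S i \<longleftrightarrow>
     (\<exists>u. blocking_prefix IS S u i \<and>
        (\<exists>R1 R2. u = R1 @ P i # R2 \<and> P i \<notin> set R2 \<and> T i \<notin> set R2))"

end

theory Submission
  imports Defs
begin

lemma exec_append:
  "exec C (a @ b) = (case exec C a of None \<Rightarrow> None | Some C1 \<Rightarrow> exec C1 b)"
proof (induction a arbitrary: C)
  case Nil then show ?case by simp
next
  case (Cons s a)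
  show ?case
  proof (cases s)
    case (P j)
    then show ?thesis using Cons.IH[of "C(j := True)"] by (simp add: fun_upd_def)
  next
    case (T j)
    then show ?thesis using Cons.IH[of "C(j := False)"] by (simp add: fun_upd_def)
  qed
qed

lemma lstep_enabled:
  "lstep (M, C) t \<Longrightarrow> \<exists>x\<in>#M. (\<exists>i w e. x = (P i # w, e) \<and> \<not> C i) \<or> (\<exists>i w e. x = (T i # w, e))"
  by (erule lstep.cases) auto

lemma exec_preserve:
  "exec C w = Some C' \<Longrightarrow> P i \<notin> set w \<Longrightarrow> T i \<notin> set w \<Longrightarrow> C' i = C i"
proof (induction w arbitrary: C)
  case Nil then show ?case by simp
next
  case (Cons s w)
  then show ?case
    by (cases s) (auto split: if_splits)
qed

lemma exec_mono:
  "exec C w = Some C' \<Longrightarrow> (\<forall>s\<in>set w. E (lidx s) \<longrightarrow> C (lidx s)) \<Longrightarrow> \<exists>E'. exec E w = Some E'"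
proof (induction w arbitrary: C C' E)
  case Nil then show ?case by simp
next
  case (Cons s w)
  show ?case
  proof (cases s)
    case (P j)
    with Cons.prems have cj: "\<not> C j" and ex: "exec (C(j := True)) w = Some C'"
      by (auto split: if_splits)
    with Cons.prems P have ej: "\<not> E j" by auto
    have "\<forall>s\<in>set w. (E(j := True)) (lidx s) \<longrightarrow> (C(j := True)) (lidx s)"
      using Cons.prems(2) by auto
    from Cons.IH[OF ex this] obtain E' where "exec (E(j := True)) w = Some E'" by blast
    then show ?thesis using P ej by auto
  next
    case (T j)
    with Cons.prems have ex: "exec (C(j := False)) w = Some C'" by auto
    have "\<forall>s\<in>set w. (E(j := False)) (lidx s) \<longrightarrow> (C(j := False)) (lidx s)"
      using Cons.prems(2) by auto
    from Cons.IH[OF ex this] obtain E' where "exec (E(j := False)) w = Some E'" by blast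
    then show ?thesis using T by auto
  qed
qed

lemma exec_last_P:
  assumes "exec E (R1 @ P i # R2) = Some E'" "P i \<notin> set R2" "T i \<notin> set R2"
  shows "E' i"
proof -
  from assms(1) obtain E1 where e1: "exec E R1 = Some E1"
    and e2: "exec E1 (P i # R2) = Some E'"
    by (auto simp: exec_append split: option.splits)
  from e2 have "exec (E1(i := True)) R2 = Some E'" by (auto split: if_splits)
  from exec_preserve[OF this assms(2,3)] show ?thesis by simp
qed

lemma exec_run:
  "exec E w = Some E' \<Longrightarrow>
   lstep\<^sup>*\<^sup>* (add_mset (w @ rest, e) p, E) (add_mset (rest, e) p, E')"
proof (induction w arbitrary: E)
  case Nil then show ?case by simp
next
  case (Cons s w)
  show ?case
  proof (cases s)
    case (P j)
    with Cons.prems have ej: "\<not> E j" and ex: "exec (E(j := True)) w = Some E'"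
      by (auto split: if_splits)
    have "lstep ({#(P j # (w @ rest), e)#} + p, E) ({#(w @ rest, e)#} + p, E(j := True))"
      by (rule lstepP[of E j, OF ej])
    then have "lstep (add_mset (s # w @ rest, e) p, E) (add_mset (w @ rest, e) p, E(j := True))"
      using P by simp
    moreover have "lstep\<^sup>*\<^sup>* (add_mset (w @ rest, e) p, E(j := True)) (add_mset (rest, e) p, E')"
      using Cons.IH[OF ex] by (simp add: fun_upd_def)
    ultimately show ?thesis by (metis append_Cons converse_rtranclp_into_rtranclp)
  next
    case (T j)
    with Cons.prems have ex: "exec (E(j := False)) w = Some E'" by auto
    have "lstep ({#(T j # (w @ rest), e)#} + p, E) ({#(w @ rest, e)#} + p, E(j := False))"
      by (rule lstepT)
    then have "lstep (add_mset (s # w @ rest, e) p, E) (add_mset (w @ rest, e) p, E(j := False))"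
      using T by simp
    moreover have "lstep\<^sup>*\<^sup>* (add_mset (w @ rest, e) p, E(j := False)) (add_mset (rest, e) p, E')"
      using Cons.IH[OF ex] by (simp add: fun_upd_def)
    ultimately show ?thesis by (metis append_Cons converse_rtranclp_into_rtranclp)
  qed
qed

lemma maxrun:
  "\<exists>w1 w2 E'. w = w1 @ w2 \<and> exec E w1 = Some E' \<and> (w2 = [] \<or> (\<exists>i t. w2 = P i # t \<and> E' i))"
proof (induction w arbitrary: E)
  case Nil then show ?case by auto
next
  case (Cons s w)
  show ?case
  proof (cases s)
    case (P j)
    show ?thesis
    proof (cases "E j")
      case True
      then show ?thesis using P by (intro exI[of _ "[]"] exI[of _ "s # w"] exI[of _ E]) auto
    next
      case False
      from Cons.IH[of "E(j := True)"] obtain w1 w2 E' where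
        "w = w1 @ w2" "exec (E(j := True)) w1 = Some E'" "w2 = [] \<or> (\<exists>i t. w2 = P i # t \<and> E' i)"
        by blast
      then show ?thesis using P False
        by (intro exI[of _ "s # w1"] exI[of _ w2] exI[of _ E']) (auto simp: fun_upd_def)
    qed
  next
    case (T j)
    from Cons.IH[of "E(j := False)"] obtain w1 w2 E' where
      "w = w1 @ w2" "exec (E(j := False)) w1 = Some E'" "w2 = [] \<or> (\<exists>i t. w2 = P i # t \<and> E' i)"
      by blast
    then show ?thesis using T
      by (intro exI[of _ "s # w1"] exI[of _ w2] exI[of _ E']) (auto simp: fun_upd_def)
  qed
qed

lemma main:
  assumes park: "\<And>E. \<not> E 1 \<Longrightarrow> \<exists>E'. exec E pre = Some E' \<and> E' 1"
  shows "E 1 \<Longrightarrow> \<exists>k s. lstep\<^sup>*\<^sup>* (add_mset (r, False)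
             (replicate_mset m (P 1 # v, True) + replicate_mset k (pre @ P 1 # v, True)), E) s
           \<and> (\<forall>t. \<not> lstep s t) \<and> \<not> lsuccessful s"
proof (induction "length r" arbitrary: r m E rule: less_induct)
  case less
  obtain r1 r2 E' where rr: "r = r1 @ r2" and ex: "exec E r1 = Some E'"
    and bl: "r2 = [] \<or> (\<exists>i t. r2 = P i # t \<and> E' i)"
    using maxrun by blast
  show ?case
  proof (cases "E' 1")
    case True
    let ?s = "(add_mset (r2, False) (replicate_mset m (P 1 # v, True)), E')"
    have run: "lstep\<^sup>*\<^sup>* (add_mset (r, False)
             (replicate_mset m (P 1 # v, True) + replicate_mset 0 (pre @ P 1 # v, True)), E) ?s"
      using exec_run[OF ex, of r2 False "replicate_mset m (P 1 # v, True)"] rr by simp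
    have stuck: "\<forall>t. \<not> lstep ?s t"
    proof (intro allI notI)
      fix t assume "lstep ?s t"
      from lstep_enabled[OF this] obtain x where
        mem: "x \<in># add_mset (r2, False) (replicate_mset m (P 1 # v, True))" and
        en: "(\<exists>i w e. x = (P i # w, e) \<and> \<not> E' i) \<or> (\<exists>i w e. x = (T i # w, e))"
        by blast
      show False
      proof (cases "x = (r2, False)")
        case True
        then show False using bl en by auto
      next
        case False
        then have "x \<in># replicate_mset m (P 1 # v, True)" using mem by auto
        then show False using en \<open>E' 1\<close> by (auto simp: in_replicate_mset split: if_splits)
      qed
    qed
    have ns: "\<not> lsuccessful ?s"
      using bl by (auto simp: lsuccessful_def in_replicate_mset)
    show ?thesis using run stuck ns by blast
  next
    case False
    have "r1 \<noteq> []" using False less.prems ex by auto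
    then have len: "length r2 < length r" using rr by simp
    obtain E'' where ex2: "exec E' pre = Some E''" and e2: "E'' 1" using park[of E', OF False] by blast
    from less.hyps[of r2 E'' "Suc m", OF len e2] obtain k s where
      ks: "lstep\<^sup>*\<^sup>* (add_mset (r2, False)
             (replicate_mset (Suc m) (P 1 # v, True) + replicate_mset k (pre @ P 1 # v, True)), E'') s"
          "\<forall>t. \<not> lstep s t" "\<not> lsuccessful s"
      by blast
    have r1: "lstep\<^sup>*\<^sup>* (add_mset (r, False)
             (replicate_mset m (P 1 # v, True) + replicate_mset (Suc k) (pre @ P 1 # v, True)), E)
            (add_mset (r2, False)
             (replicate_mset m (P 1 # v, True) + replicate_mset (Suc k) (pre @ P 1 # v, True)), E')"
      using exec_run[OF ex, of r2 False] rr by simp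
    have r2: "lstep\<^sup>*\<^sup>* (add_mset (pre @ P 1 # v, True) (add_mset (r2, False)
             (replicate_mset m (P 1 # v, True) + replicate_mset k (pre @ P 1 # v, True))), E')
            (add_mset (P 1 # v, True) (add_mset (r2, False)
             (replicate_mset m (P 1 # v, True) + replicate_mset k (pre @ P 1 # v, True))), E'')"
      by (rule exec_run[OF ex2])
    have eq1: "add_mset (r2, False)
             (replicate_mset m (P 1 # v, True) + replicate_mset (Suc k) (pre @ P 1 # v, True))
           = add_mset (pre @ P 1 # v, True) (add_mset (r2, False)
             (replicate_mset m (P 1 # v, True) + replicate_mset k (pre @ P 1 # v, True)))"
      by simp
    have eq2: "add_mset (P 1 # v, True) (add_mset (r2, False)
             (replicate_mset m (P 1 # v, True) + replicate_mset k (pre @ P 1 # v, True)))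
           = add_mset (r2, False)
             (replicate_mset (Suc m) (P 1 # v, True) + replicate_mset k (pre @ P 1 # v, True))"
      by simp
    have "lstep\<^sup>*\<^sup>* (add_mset (r, False)
             (replicate_mset m (P 1 # v, True) + replicate_mset (Suc k) (pre @ P 1 # v, True)), E) s"
      using r1 r2 ks(1) unfolding eq1 eq2 by (meson rtranclp_trans)
    then show ?thesis using ks(2,3) by blast
  qed
qed

lemma sstep_keeps_check: "sstep y z \<Longrightarrow> SCheck \<in># y \<Longrightarrow> SCheck \<in># z"
  by (erule sstep.cases) auto

lemma src_must:
  fixes k :: nat
  defines "p \<equiv> add_mset (SRecv SZero) (replicate_mset (Suc k) (SSend SCheck))"
  shows "smust p"
proof -
  have first: "SCheck \<in># z" if "sstep p z" for z
    using that
  proof (cases rule: sstep.cases)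
    case (1 u1 u2 q)
    then have "SSend u1 \<in># p" by simp
    then have "u1 = SCheck" unfolding p_def by (auto simp: in_replicate_mset split: if_splits)
    then show ?thesis using 1 by simp
  qed
  have inv: "q = p \<or> SCheck \<in># q" if "sstep\<^sup>*\<^sup>* p q" for q
    using that
  proof (induction rule: rtranclp_induct)
    case base then show ?case by simp
  next
    case (step y z)
    then show ?case using first sstep_keeps_check by blast
  qed
  have pe: "p = {#SSend SCheck, SRecv SZero#} + replicate_mset k (SSend SCheck)"
    unfolding p_def by simp
  have "sstep p ({#SCheck, SZero#} + replicate_mset k (SSend SCheck))"
    unfolding pe by (rule sstep.intros)
  then have mp: "smay p" unfolding smay_def ssuccessful_def
    by (intro exI[of _ "{#SCheck, SZero#} + replicate_mset k (SSend SCheck)"]) auto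
  show ?thesis unfolding smust_def
  proof (intro allI impI)
    fix q assume "sstep\<^sup>*\<^sup>* p q"
    from inv[OF this] show "smay q"
    proof
      assume "q = p" then show ?thesis using mp by simp
    next
      assume "SCheck \<in># q" then show ?thesis unfolding smay_def ssuccessful_def by blast
    qed
  qed
qed

theorem lemma5p11:
  fixes IS :: lstore
  shows "\<not> (\<exists>ws wr. wf_word 2 ws \<and> wf_word 2 wr \<and>
              btype_PP IS ws 1 \<and> btype_P IS wr 2 \<and>
              correct_translation IS ws wr)"
proof
  assume "\<exists>ws wr. wf_word 2 ws \<and> wf_word 2 wr \<and>
              btype_PP IS ws 1 \<and> btype_P IS wr 2 \<and>
              correct_translation IS ws wr"
  then obtain ws wr where wf: "wf_word 2 ws" and bpp: "btype_PP IS ws 1"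
    and bp: "btype_P IS wr 2" and corr: "correct_translation IS ws wr"
    by blast
  from bpp obtain u v C R1 R2 where ws: "ws = u @ P 1 # v" and exu: "exec IS u = Some C"
    and c1: "C 1" and u: "u = R1 @ P 1 # R2" and r2: "P 1 \<notin> set R2" "T 1 \<notin> set R2"
    unfolding btype_PP_def blocking_prefix_def by blast
  from bp obtain u' v' D where exu': "exec IS u' = Some D" and d2: "D 2"
    and u': "P 2 \<notin> set u'" "T 2 \<notin> set u'"
    unfolding btype_P_def blocking_prefix_def by blast
  have IS2: "IS 2" using exec_preserve[OF exu' u'] d2 by simp
  have park: "\<exists>E'. exec E u = Some E' \<and> E' 1" if ne: "\<not> E 1" for E
  proof -
    have "\<forall>s\<in>set u. E (lidx s) \<longrightarrow> IS (lidx s)"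
    proof
      fix s assume "s \<in> set u"
      then have "s \<in> set ws" using ws by simp
      then have "lidx s = 1 \<or> lidx s = 2" using wf unfolding wf_word_def by force
      then show "E (lidx s) \<longrightarrow> IS (lidx s)" using ne IS2 by auto
    qed
    from exec_mono[OF exu this] obtain E' where ex: "exec E u = Some E'" by blast
    have "E' 1" using exec_last_P[of E R1 1 R2 E'] ex u r2 by simp
    then show ?thesis using ex by blast
  qed
  from main[of u C wr 1 v, OF park c1] obtain k s where
    ks: "lstep\<^sup>*\<^sup>* (add_mset (wr, False)
             (replicate_mset 1 (P 1 # v, True) + replicate_mset k (u @ P 1 # v, True)), C) s"
        "\<forall>t. \<not> lstep s t" "\<not> lsuccessful s"
    by blast
  define p where "p = add_mset (SRecv SZero) (replicate_mset (Suc k) (SSend SCheck))"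
  have sm: "smust p" unfolding p_def by (rule src_must)
  have tr: "trproc ws wr p = add_mset (u @ P 1 # v, True) (add_mset (wr, False) (replicate_mset k (u @ P 1 # v, True)))"
    unfolding p_def trproc_def ws by simp
  have run0: "lstep\<^sup>*\<^sup>* (add_mset (u @ P 1 # v, True) (add_mset (wr, False) (replicate_mset k (u @ P 1 # v, True))), IS)
       (add_mset (P 1 # v, True) (add_mset (wr, False) (replicate_mset k (u @ P 1 # v, True))), C)"
    by (rule exec_run[OF exu])
  have eq: "add_mset (P 1 # v, True) (add_mset (wr, False) (replicate_mset k (u @ P 1 # v, True)))
     = add_mset (wr, False) (replicate_mset 1 (P 1 # v, True) + replicate_mset k (u @ P 1 # v, True))"
    by simp
  have reach: "lstep\<^sup>*\<^sup>* (trproc ws wr p, IS) s"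
    using run0 ks(1) unfolding tr eq by (meson rtranclp_trans)
  have "\<not> lmay s"
  proof
    assume "lmay s"
    then obtain s' where "lstep\<^sup>*\<^sup>* s s'" "lsuccessful s'" unfolding lmay_def by blast
    then show False using ks(2,3) by (metis converse_rtranclpE)
  qed
  then have "\<not> lmust (trproc ws wr p, IS)" using reach unfolding lmust_def by blast
  moreover have "smust p \<longleftrightarrow> lmust (trproc ws wr p, IS)"
    using corr unfolding correct_translation_def by blast
  ultimately show False using sm by blast
qed

end
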